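(* Let $\gamma>0$ and $0<\alpha<1$. For $j\in\mathbb{Z}_{\ge0}$ let $F_j={}_2F_1(\gamma,j\gamma;1+j\gamma;\alpha)$, and define $$g(x)=\sum_{l=0}^{\infty}\frac{(-x)^l}{l!}\,\frac{1}{\prod_{j=0}^{l}F_j}.$$ Then $g$ is an entire function of $x$.
   Context: ${}_2F_1$ denotes the Gauss hypergeometric function. Note $F_0=1$. *)

theory Defs
  imports "HOL-Complex_Analysis.Complex_Analysis"
begin

definition hyp2F1 :: "real \<Rightarrow> real \<Rightarrow> real \<Rightarrow> real \<Rightarrow> real" where
  "hyp2F1 a b c z =
     (\<Sum>n. pochhammer a n * pochhammer b n / (pochhammer c n * fact n) * z ^ n)"

definition Fj :: "real \<Rightarrow> real \<Rightarrow> nat \<Rightarrow> real" where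
  "Fj \<gamma> \<alpha> j = hyp2F1 \<gamma> (real j * \<gamma>) (1 + real j * \<gamma>) \<alpha>"

definition g_term :: "real \<Rightarrow> real \<Rightarrow> complex \<Rightarrow> nat \<Rightarrow> complex" where
  "g_term \<gamma> \<alpha> x l =
     (-x) ^ l / fact l / complex_of_real (\<Prod>j\<in>{0..l}. Fj \<gamma> \<alpha> j)"

definition g_fun :: "real \<Rightarrow> real \<Rightarrow> complex \<Rightarrow> complex" where
  "g_fun \<gamma> \<alpha> x = (\<Sum>l. g_term \<gamma> \<alpha> x l)"

end

theory Submission
  imports Defs
begin

lemma poch_nonneg: "(x::real) \<ge> 0 \<Longrightarrow> pochhammer x n \<ge> 0"
  by (induction n) (auto simp: pochhammer_Suc)

lemma aux_term: "(-(x::complex)) ^ l / fact l / complex_of_real p = (-1) ^ l / fact l / complex_of_real p * x ^ l"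
proof -
  have "(-x) ^ l = (-1) ^ l * x ^ l" by (rule power_minus)
  then show ?thesis by (metis times_divide_eq_left)
qed

lemma aux_cnorm: "(p::real) \<ge> 1 \<Longrightarrow> norm ((-1) ^ l / fact l / complex_of_real p) \<le> 1 / fact l"
proof -
  assume p: "p \<ge> 1"
  have n1: "norm ((-1::complex) ^ l) = 1" by (simp add: norm_power)
  have nf: "norm (fact l :: complex) = fact l" by (rule norm_fact)
  have np: "norm (complex_of_real p) = p" using p by simp
  have "norm ((-1) ^ l / fact l / complex_of_real p) = 1 / fact l / p"
    by (simp only: norm_divide n1 nf np)
  also have "\<dots> \<le> 1 / fact l / 1" using p by (intro divide_left_mono) auto
  finally show ?thesis by simp
qed

lemma aux_norm: "(T::real) \<ge> 0 \<Longrightarrow> 0 \<le> r \<Longrightarrow> r \<le> c \<Longrightarrow> norm (T * r) \<le> c * norm T"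
  by (simp add: mult_left_mono mult.commute)

lemma hyp_summable:
  fixes \<gamma> \<alpha> b :: real
  assumes g: "\<gamma> > 0" and a: "0 < \<alpha>" "\<alpha> < 1" and b: "b \<ge> 0"
  shows "summable (\<lambda>n. pochhammer \<gamma> n * pochhammer b n / (pochhammer (1+b) n * fact n) * \<alpha> ^ n)"
    (is "summable ?t")
proof -
  define c where "c = (1 + \<alpha>) / 2"
  have c1: "c < 1" using a by (simp add: c_def)
  define N where "N = nat \<lceil>2 * \<gamma> / (1 - \<alpha>)\<rceil>"
  show ?thesis
  proof (rule summable_ratio_test[OF c1, of N])
    fix n assume nN: "N \<le> n"
    have p1: "pochhammer (1+b) n > 0" using b by (intro pochhammer_pos) simp
    have tn: "?t n \<ge> 0" using g a b p1
      by (intro mult_nonneg_nonneg divide_nonneg_pos poch_nonneg) auto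
    have rec: "?t (Suc n) = ?t n * ((\<gamma> + n) * (b + n) / ((1 + b + n) * (n + 1)) * \<alpha>)"
      using p1 by (simp add: pochhammer_Suc field_simps)
    have r0: "(\<gamma> + n) * (b + n) / ((1 + b + n) * (n + 1)) * \<alpha> \<ge> 0"
      using g a b by (intro mult_nonneg_nonneg divide_nonneg_pos) auto
    have "(\<gamma> + n) * (b + n) / ((1 + b + n) * (n + 1)) * \<alpha> \<le> (\<gamma> + n) / (n + 1) * \<alpha>"
    proof -
      have "(b + n) / (1 + b + n) \<le> 1" using b by simp
      hence "(\<gamma> + n) / (n + 1) * ((b + n) / (1 + b + n)) \<le> (\<gamma> + n) / (n + 1)"
        using g by (intro mult_left_le) auto
      hence "(\<gamma> + n) / (n + 1) * ((b + n) / (1 + b + n)) * \<alpha> \<le> (\<gamma> + n) / (n + 1) * \<alpha>"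
        using a by (intro mult_right_mono) auto
      moreover have "(\<gamma> + n) * (b + n) / ((1 + b + n) * (n + 1)) * \<alpha> = (\<gamma> + n) / (n + 1) * ((b + n) / (1 + b + n)) * \<alpha>"
        by simp
      ultimately show ?thesis by linarith
    qed
    also have "\<dots> \<le> c"
    proof -
      have "real n \<ge> 2 * \<gamma> / (1 - \<alpha>)" using nN unfolding N_def by linarith
      hence "real n * (1 - \<alpha>) \<ge> 2 * \<gamma>" using a by (simp add: field_simps)
      hence "(\<gamma> + n) * \<alpha> \<le> c * (n + 1)" using a g unfolding c_def
        by (simp add: algebra_simps) (smt (verit, best) mult_left_le_one_le mult_nonneg_nonneg)
      thus ?thesis by (simp add: field_simps)
    qed
    finally have rle: "(\<gamma> + n) * (b + n) / ((1 + b + n) * (n + 1)) * \<alpha> \<le> c" .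
    show "norm (?t (Suc n)) \<le> c * norm (?t n)"
      unfolding rec by (rule aux_norm[OF tn r0 rle])
  qed
qed

lemma Fj_bound:
  fixes \<gamma> \<alpha> :: real
  assumes g: "\<gamma> > 0" and a: "0 < \<alpha>" "\<alpha> < 1"
  shows "Fj \<gamma> \<alpha> j \<ge> 1"
proof -
  let ?t = "\<lambda>n. pochhammer \<gamma> n * pochhammer (real j * \<gamma>) n / (pochhammer (1+ real j * \<gamma>) n * fact n) * \<alpha> ^ n"
  have s: "summable ?t" using hyp_summable[OF g a, of "real j * \<gamma>"] g by simp
  have nn: "\<And>n. ?t n \<ge> 0"
  proof -
    fix n
    have "0 \<le> real j * \<gamma>" using g by simp
    hence "pochhammer (1+ real j * \<gamma>) n > 0" by (intro pochhammer_pos) linarith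
    then show "?t n \<ge> 0" using g a
      by (intro mult_nonneg_nonneg divide_nonneg_pos poch_nonneg) auto
  qed
  have "sum ?t {0} \<le> suminf ?t" by (rule sum_le_suminf[OF s]) (use nn in auto)
  moreover have "sum ?t {0} = 1" by simp
  moreover have "Fj \<gamma> \<alpha> j = suminf ?t" unfolding Fj_def hyp2F1_def by (rule refl)
  ultimately show ?thesis by linarith
qed

theorem mainTheorem7:
  fixes \<gamma> \<alpha> :: real
  assumes "\<gamma> > 0" and "0 < \<alpha>" and "\<alpha> < 1"
  shows "(\<forall>x::complex. summable (g_term \<gamma> \<alpha> x)) \<and> g_fun \<gamma> \<alpha> holomorphic_on UNIV"
proof -
  define c :: "nat \<Rightarrow> complex" where
    "c l = (-1) ^ l / fact l / complex_of_real (\<Prod>j\<in>{0..l}. Fj \<gamma> \<alpha> j)" for l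
  have gt: "g_term \<gamma> \<alpha> x l = c l * x ^ l" for x l
    unfolding g_term_def c_def by (rule aux_term)
  have P: "(\<Prod>j\<in>{0..l}. Fj \<gamma> \<alpha> j) \<ge> 1" for l
    using Fj_bound[OF assms] by (intro prod_ge_1) auto
  have cb: "norm (c l) \<le> 1 / fact l" for l
    unfolding c_def by (rule aux_cnorm[OF P])
  have sm: "summable (\<lambda>l. c l * y ^ l)" for y :: complex
  proof (rule summable_comparison_test')
    show "summable (\<lambda>l. norm y ^ l / fact l)"
      using summable_exp[of "norm y"] by (simp add: field_simps)
    fix n
    have "norm (c n * y ^ n) = norm (c n) * norm y ^ n" by (simp add: norm_mult norm_power)
    also have "\<dots> \<le> 1 / fact n * norm y ^ n" by (intro mult_right_mono cb) auto
    finally show "norm (c n * y ^ n) \<le> norm y ^ n / fact n" by simp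
  qed
  have gf: "g_fun \<gamma> \<alpha> = (\<lambda>x. \<Sum>n. c n * x ^ n)"
    unfolding g_fun_def gt ..
  show ?thesis
  proof
    have gtf: "g_term \<gamma> \<alpha> x = (\<lambda>l. c l * x ^ l)" for x by (rule ext) (rule gt)
    show "\<forall>x. summable (g_term \<gamma> \<alpha> x)" unfolding gtf using sm by blast
    show "g_fun \<gamma> \<alpha> holomorphic_on UNIV"
      unfolding gf holomorphic_on_def field_differentiable_def
      using termdiffs_strong_converges_everywhere[OF sm]
      by (blast intro: has_field_derivative_at_within)
  qed
qed

end
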